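(* Let $\lambda,\lambda_1,\sigma,\sigma_1\in\mathbb{C}^*$ and $\eta,\eta_1\in\mathbb{C}$. Then: (1) $\Omega(\lambda,\eta,\sigma,0)\cong\Omega(\lambda_1,\eta_1,\sigma_1,0)$ as $\mathcal{G}$-modules if and only if $\lambda=\lambda_1,\eta=\eta_1,\sigma=\sigma_1$; (2) $\Omega(\lambda,\eta,0,\sigma)\cong\Omega(\lambda_1,\eta_1,0,\sigma_1)$ if and only if $\lambda=\lambda_1,\eta=\eta_1,\sigma=\sigma_1$; (3) $\Omega(\lambda,\eta,\sigma,0)$ and $\Omega(\lambda_1,\eta_1,0,\sigma_1)$ are not isomorphic.
   Context: $\mathcal{G}$ is the complex Lie algebra with basis $\{L_n,H_n,I_n,J_n,\mathbf{c}_1,\mathbf{c}_2,\mathbf{c}_3: n\in\mathbb{Z}\}$ whose brackets of basis elements are $[L_m,L_n]=(n-m)L_{m+n}+\frac{m^3-m}{12}\delta_{m+n,0}\mathbf{c}_1$, $[L_m,H_n]=nH_{m+n}+m^2\delta_{m+n,0}\mathbf{c}_2$, $[H_m,H_n]=m\delta_{m+n,0}\mathbf{c}_3$, $[L_m,I_n]=(n-m)I_{m+n}$, $[L_m,J_n]=(n-m)J_{m+n}$, $[H_m,I_n]=I_{m+n}$, $[H_m,J_n]=-J_{m+n}$ (and antisymmetric counterparts), all other brackets of basis elements zero. For $\lambda\in\mathbb{C}^*,\eta\in\mathbb{C}$, $\sigma\in\mathbb{C}^*$: $\Omega(\lambda,\eta,\sigma,0)$ is $\mathbb{C}[X,Y]$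 with $L_mf(X,Y)=\lambda^mf(X,Y-m)(Y-mX+m\eta)$, $H_mf=\lambda^mXf(X,Y-m)$, $I_mf=\lambda^m\sigma f(X-1,Y-m)$, and $J_m,\mathbf{c}_1,\mathbf{c}_2,\mathbf{c}_3$ acting as $0$; $\Omega(\lambda,\eta,0,\sigma)$ is $\mathbb{C}[X,Y]$ with $L_mf=\lambda^mf(X,Y-m)(Y+mX+m\eta)$, $H_mf=\lambda^mXf(X,Y-m)$, $J_mf=\lambda^m\sigma f(X+1,Y-m)$, and $I_m,\mathbf{c}_1,\mathbf{c}_2,\mathbf{c}_3$ acting as $0$ ($m\in\mathbb{Z}$). *)

theory Defs
  imports "HOL-Computational_Algebra.Polynomial"
begin

datatype gbasis = L int | H int | I int | J int | C1 | C2 | C3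

text \<open>C[X,Y] is represented as polynomials in Y with coefficients in C[X].\<close>
type_synonym cxy = "complex poly poly"

definition polyX :: cxy where "polyX = [:[:0, 1:]:]"
definition polyY :: cxy where "polyY = [:0, 1:]"
definition constp :: "complex \<Rightarrow> cxy" where "constp c = [:[:c:]:]"

text \<open>f(X + a, Y + b)\<close>
definition shiftXY :: "complex \<Rightarrow> complex \<Rightarrow> cxy \<Rightarrow> cxy" where
  "shiftXY a b f = pcompose (map_poly (\<lambda>c. pcompose c [:a, 1:]) f) [:[:b:], 1:]"

text \<open>Omega(lambda, eta, sigma, 0): action of basis elements.\<close>
definition omegaI :: "complex \<Rightarrow> complex \<Rightarrow> complex \<Rightarrow> gbasis \<Rightarrow> cxy \<Rightarrow> cxy" where
  "omegaI lam eta sig b f = (case b of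
     L m \<Rightarrow> constp (lam powi m) * shiftXY 0 (- of_int m) f
              * (polyY - constp (of_int m) * polyX + constp (of_int m * eta))
   | H m \<Rightarrow> constp (lam powi m) * polyX * shiftXY 0 (- of_int m) f
   | I m \<Rightarrow> constp (lam powi m * sig) * shiftXY (-1) (- of_int m) f
   | J m \<Rightarrow> 0
   | C1 \<Rightarrow> 0 | C2 \<Rightarrow> 0 | C3 \<Rightarrow> 0)"

text \<open>Omega(lambda, eta, 0, sigma): action of basis elements.\<close>
definition omegaJ :: "complex \<Rightarrow> complex \<Rightarrow> complex \<Rightarrow> gbasis \<Rightarrow> cxy \<Rightarrow> cxy" where
  "omegaJ lam eta sig b f = (case b of
     L m \<Rightarrow> constp (lam powi m) * shiftXY 0 (- of_int m) f
              * (polyY + constp (of_int m) * polyX + constp (of_int m * eta))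
   | H m \<Rightarrow> constp (lam powi m) * polyX * shiftXY 0 (- of_int m) f
   | I m \<Rightarrow> 0
   | J m \<Rightarrow> constp (lam powi m * sig) * shiftXY 1 (- of_int m) f
   | C1 \<Rightarrow> 0 | C2 \<Rightarrow> 0 | C3 \<Rightarrow> 0)"

text \<open>Isomorphism of G-modules on the common underlying space C[X,Y]: a C-linear bijection
  intertwining the actions of all basis elements (hence of all of G, by linearity).\<close>
definition gmod_iso :: "(gbasis \<Rightarrow> cxy \<Rightarrow> cxy) \<Rightarrow> (gbasis \<Rightarrow> cxy \<Rightarrow> cxy) \<Rightarrow> bool" where
  "gmod_iso \<rho>1 \<rho>2 \<longleftrightarrow> (\<exists>\<phi>. (\<forall>f g. \<phi> (f + g) = \<phi> f + \<phi> g)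
      \<and> (\<forall>c f. \<phi> (constp c * f) = constp c * \<phi> f)
      \<and> bij \<phi>
      \<and> (\<forall>b f. \<phi> (\<rho>1 b f) = \<rho>2 b (\<phi> f)))"

end

theory Submission
  imports Defs
begin

lemma shift00[simp]: "shiftXY 0 0 f = f"
  unfolding shiftXY_def by (simp add: map_poly_idI)

lemma shift_const[simp]: "shiftXY a b (constp c) = constp c"
  unfolding shiftXY_def constp_def by (simp add: map_poly_pCons)

lemma shift_one[simp]: "shiftXY a b 1 = 1"
  using shift_const[of a b 1] by (simp add: constp_def one_pCons)

lemma constp_mult: "constp a * constp b = constp (a * b)"
  by (simp add: constp_def)

lemma constp_1[simp]: "constp 1 = 1"
  by (simp add: constp_def one_pCons)

lemma constp_0[simp]: "constp 0 = 0"
  by (simp add: constp_def)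

lemma iso_scalar:
  fixes \<rho>1 \<rho>2 :: "gbasis \<Rightarrow> cxy \<Rightarrow> cxy"
  assumes add: "\<forall>f g. \<phi> (f + g) = \<phi> f + \<phi> g"
    and sc: "\<forall>c f. \<phi> (constp c * f) = constp c * \<phi> f"
    and bj: "bij \<phi>"
    and int: "\<forall>b f. \<phi> (\<rho>1 b f) = \<rho>2 b (\<phi> f)"
    and H1: "\<And>f. \<rho>1 (H 0) f = polyX * f" and H2: "\<And>f. \<rho>2 (H 0) f = polyX * f"
    and L1: "\<And>f. \<rho>1 (L 0) f = polyY * f" and L2: "\<And>f. \<rho>2 (L 0) f = polyY * f"
  shows "\<exists>c. c \<noteq> 0 \<and> (\<forall>f. \<phi> f = constp c * f)"
proof -
  define p where "p = \<phi> 1"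
  have X: "\<phi> (polyX * f) = polyX * \<phi> f" for f
    using int H1 H2 by metis
  have Y: "\<phi> (polyY * f) = polyY * \<phi> f" for f
    using int L1 L2 by metis
  have cst: "\<phi> [:a:] = [:a:] * p" for a
  proof (induction a)
    case 0
    have "\<phi> (constp 0 * 1) = constp 0 * \<phi> 1" using sc by blast
    then show ?case by (simp add: constp_def)
  next
    case (pCons c r)
    have e: "[:pCons c r:] = constp c * 1 + polyX * [:r:]"
      by (simp add: constp_def polyX_def one_pCons)
    have "\<phi> [:pCons c r:] = constp c * p + polyX * ([:r:] * p)"
      unfolding e using add sc X pCons.IH p_def by metis
    also have "\<dots> = [:pCons c r:] * p"
      by (simp add: e algebra_simps)
    finally show ?case .
  qed
  have all: "\<phi> f = f * p" for f
  proof (induction f)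
    case 0
    then show ?case using cst[of 0] by simp
  next
    case (pCons a q)
    have e: "pCons a q = [:a:] + polyY * q"
      by (simp add: polyY_def)
    have "\<phi> (pCons a q) = [:a:] * p + polyY * (q * p)"
      unfolding e using add cst Y pCons.IH by metis
    then show ?case by (simp add: e algebra_simps)
  qed
  obtain f where "\<phi> f = 1" using bj by (metis bij_def surj_def)
  hence "f * p = 1" using all by simp
  hence "p dvd 1" by (metis dvdI mult.commute)
  then obtain q where q: "p = [:q:]" "q dvd 1" by (auto simp: is_unit_poly_iff)
  then obtain c where c: "q = [:c:]" "c dvd 1" by (auto simp: is_unit_poly_iff)
  show ?thesis
    using all q c by (intro exI[of _ c]) (auto simp: constp_def mult.commute)
qed

lemma omegaI_basic:
  "omegaI l e s (H 0) f = polyX * f" "omegaI l e s (L 0) f = polyY * f"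
  by (simp_all add: omegaI_def)

lemma omegaJ_basic:
  "omegaJ l e s (H 0) f = polyX * f" "omegaJ l e s (L 0) f = polyY * f"
  by (simp_all add: omegaJ_def)

lemma dirI:
  assumes "gmod_iso (omegaI lam eta sig) (omegaI lam1 eta1 sig1)" "lam \<noteq> 0"
  shows "lam = lam1 \<and> eta = eta1 \<and> sig = sig1"
proof -
  obtain \<phi> where P: "\<forall>f g. \<phi> (f + g) = \<phi> f + \<phi> g"
      "\<forall>c f. \<phi> (constp c * f) = constp c * \<phi> f" "bij \<phi>"
      "\<forall>b f. \<phi> (omegaI lam eta sig b f) = omegaI lam1 eta1 sig1 b (\<phi> f)"
    using assms(1) unfolding gmod_iso_def by blast
  obtain c where c: "c \<noteq> 0" "\<And>f. \<phi> f = constp c * f"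
    using iso_scalar[OF P omegaI_basic(1) omegaI_basic(1) omegaI_basic(2) omegaI_basic(2)] by blast
  have e1: "constp c * omegaI lam eta sig b 1 = omegaI lam1 eta1 sig1 b (constp c)" for b
    using P(4) c(2)[of 1] c(2) by simp
  have h: "coeff (coeff (constp c * omegaI lam eta sig (H 1) 1) 0) 1
         = coeff (coeff (omegaI lam1 eta1 sig1 (H 1) (constp c)) 0) 1"
    using e1 by metis
  have l: "coeff (coeff (constp c * omegaI lam eta sig (L 1) 1) 0) 0
         = coeff (coeff (omegaI lam1 eta1 sig1 (L 1) (constp c)) 0) 0"
    using e1 by metis
  have i: "coeff (coeff (constp c * omegaI lam eta sig (I 0) 1) 0) 0
         = coeff (coeff (omegaI lam1 eta1 sig1 (I 0) (constp c)) 0) 0"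
    using e1 by metis
  from h have 1: "lam = lam1" using c(1)
    by (simp add: omegaI_def constp_def polyX_def polyY_def shift_const[unfolded constp_def])
  from l have 2: "eta = eta1" using c(1) 1 assms(2)
    by (simp add: omegaI_def constp_def polyX_def polyY_def shift_const[unfolded constp_def])
  from i have 3: "sig = sig1" using c(1)
    by (simp add: omegaI_def constp_def polyX_def polyY_def shift_const[unfolded constp_def])
  show ?thesis using 1 2 3 by simp
qed


lemma dirJ:
  assumes "gmod_iso (omegaJ lam eta sig) (omegaJ lam1 eta1 sig1)" "lam \<noteq> 0"
  shows "lam = lam1 \<and> eta = eta1 \<and> sig = sig1"
proof -
  obtain \<phi> where P: "\<forall>f g. \<phi> (f + g) = \<phi> f + \<phi> g"
      "\<forall>c f. \<phi> (constp c * f) = constp c * \<phi> f" "bij \<phi>"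
      "\<forall>b f. \<phi> (omegaJ lam eta sig b f) = omegaJ lam1 eta1 sig1 b (\<phi> f)"
    using assms(1) unfolding gmod_iso_def by blast
  obtain c where c: "c \<noteq> 0" "\<And>f. \<phi> f = constp c * f"
    using iso_scalar[OF P omegaJ_basic(1) omegaJ_basic(1) omegaJ_basic(2) omegaJ_basic(2)] by blast
  have e1: "constp c * omegaJ lam eta sig b 1 = omegaJ lam1 eta1 sig1 b (constp c)" for b
    using P(4) c(2)[of 1] c(2) by simp
  have h: "coeff (coeff (constp c * omegaJ lam eta sig (H 1) 1) 0) 1
         = coeff (coeff (omegaJ lam1 eta1 sig1 (H 1) (constp c)) 0) 1"
    using e1 by metis
  have l: "coeff (coeff (constp c * omegaJ lam eta sig (L 1) 1) 0) 0
         = coeff (coeff (omegaJ lam1 eta1 sig1 (L 1) (constp c)) 0) 0"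
    using e1 by metis
  have i: "coeff (coeff (constp c * omegaJ lam eta sig (J 0) 1) 0) 0
         = coeff (coeff (omegaJ lam1 eta1 sig1 (J 0) (constp c)) 0) 0"
    using e1 by metis
  from h have 1: "lam = lam1" using c(1)
    by (simp add: omegaJ_def constp_def polyX_def polyY_def shift_const[unfolded constp_def])
  from l have 2: "eta = eta1" using c(1) 1 assms(2)
    by (simp add: omegaJ_def constp_def polyX_def polyY_def shift_const[unfolded constp_def])
  from i have 3: "sig = sig1" using c(1)
    by (simp add: omegaJ_def constp_def polyX_def polyY_def shift_const[unfolded constp_def])
  show ?thesis using 1 2 3 by simp
qed


lemma nonIJ:
  assumes "gmod_iso (omegaI lam eta sig) (omegaJ lam1 eta1 sig1)" "sig \<noteq> 0"
  shows False
proof -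
  obtain \<phi> where P: "\<forall>f g. \<phi> (f + g) = \<phi> f + \<phi> g"
      "\<forall>c f. \<phi> (constp c * f) = constp c * \<phi> f" "bij \<phi>"
      "\<forall>b f. \<phi> (omegaI lam eta sig b f) = omegaJ lam1 eta1 sig1 b (\<phi> f)"
    using assms(1) unfolding gmod_iso_def by blast
  obtain c where c: "c \<noteq> 0" "\<And>f. \<phi> f = constp c * f"
    using iso_scalar[OF P omegaI_basic(1) omegaJ_basic(1) omegaI_basic(2) omegaJ_basic(2)] by blast
  have e1: "constp c * omegaI lam eta sig b 1 = omegaJ lam1 eta1 sig1 b (constp c)" for b
    using P(4) c(2)[of 1] c(2) by simp
  have i: "coeff (coeff (constp c * omegaI lam eta sig (I 0) 1) 0) 0
         = coeff (coeff (omegaJ lam1 eta1 sig1 (I 0) (constp c)) 0) 0"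
    using e1 by metis
  then show False using c(1) assms(2)
    by (simp add: omegaI_def omegaJ_def constp_def polyX_def polyY_def shift_const[unfolded constp_def])
qed

lemma iso_refl: "gmod_iso \<rho> \<rho>"
  unfolding gmod_iso_def by (intro exI[of _ id]) auto

theorem corollary4p4:
  fixes lam lam1 sig sig1 eta eta1 :: complex
  assumes "lam \<noteq> 0" "lam1 \<noteq> 0" "sig \<noteq> 0" "sig1 \<noteq> 0"
  shows "(gmod_iso (omegaI lam eta sig) (omegaI lam1 eta1 sig1)
            \<longleftrightarrow> lam = lam1 \<and> eta = eta1 \<and> sig = sig1)
       \<and> (gmod_iso (omegaJ lam eta sig) (omegaJ lam1 eta1 sig1)
            \<longleftrightarrow> lam = lam1 \<and> eta = eta1 \<and> sig = sig1)
       \<and> \<not> gmod_iso (omegaI lam eta sig) (omegaJ lam1 eta1 sig1)"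
  using dirI[OF _ assms(1)] dirJ[OF _ assms(1)] nonIJ[OF _ assms(3)] iso_refl by blast

end
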